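(* Let $\alpha$ be an action of a discrete group $G$ on a non-compact locally compact Hausdorff space $X$ with more than two points, such that for every compact $K\subseteq X$ and every nonempty open $U\subseteq X$ there exists $g\in G$ with $\alpha_g(K)\subseteq U$. Then the induced action $\sigma_g(f)=f\circ\alpha_g^{-1}$ on $C_0(X)$ is $G$-separating.
   Context: $\sigma$ is $G$-separating if for all $a,b\in C_0(X)_+$, $c\in C_0(X)$, $\varepsilon>0$ there exist $s,t\in C_0(X)$, $g,h\in G$ with $\|s^*as-\sigma_g(a)\|<\varepsilon$, $\|t^*bt-\sigma_h(b)\|<\varepsilon$, $\|s^*ct\|<\varepsilon$. *)

theory Defs
  imports "HOL-Analysis.Analysis"
begin

definition C0 :: "('a::topological_space \<Rightarrow> complex) set" where
  "C0 = {f. continuous_on UNIV f \<and>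
            (\<forall>e>0. \<exists>K. compact K \<and> (\<forall>x. x \<notin> K \<longrightarrow> norm (f x) < e))}"

definition C0_pos :: "('a::topological_space \<Rightarrow> complex) set" where
  "C0_pos = {f \<in> C0. \<forall>x. Im (f x) = 0 \<and> 0 \<le> Re (f x)}"

definition supnorm :: "('a \<Rightarrow> complex) \<Rightarrow> real" where
  "supnorm f = (SUP x. norm (f x))"

text \<open>The product s^* a t in the commutative C*-algebra C_0(X).\<close>
definition sandw :: "('a \<Rightarrow> complex) \<Rightarrow> ('a \<Rightarrow> complex) \<Rightarrow> ('a \<Rightarrow> complex) \<Rightarrow> ('a \<Rightarrow> complex)" where
  "sandw s a t = (\<lambda>x. cnj (s x) * a x * t x)"

text \<open>Action of a group (written additively, not necessarily abelian) on a space by homeomorphisms.\<close>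
definition group_action_homeo :: "('g::group_add \<Rightarrow> 'a::topological_space \<Rightarrow> 'a) \<Rightarrow> bool" where
  "group_action_homeo \<alpha> \<longleftrightarrow> \<alpha> 0 = id \<and> (\<forall>g h. \<alpha> (g + h) = \<alpha> g \<circ> \<alpha> h)
      \<and> (\<forall>g. continuous_on UNIV (\<alpha> g))"

definition induced_action :: "('g::group_add \<Rightarrow> 'a \<Rightarrow> 'a) \<Rightarrow> 'g \<Rightarrow> ('a \<Rightarrow> complex) \<Rightarrow> ('a \<Rightarrow> complex)" where
  "induced_action \<alpha> g f = f \<circ> \<alpha> (- g)"

definition G_separating :: "('g \<Rightarrow> ('a::topological_space \<Rightarrow> complex) \<Rightarrow> ('a \<Rightarrow> complex)) \<Rightarrow> bool" where
  "G_separating \<sigma> \<longleftrightarrow>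
     (\<forall>a\<in>C0_pos. \<forall>b\<in>C0_pos. \<forall>c\<in>C0. \<forall>\<epsilon>>0.
        \<exists>s\<in>C0. \<exists>t\<in>C0. \<exists>g h.
          supnorm (\<lambda>x. sandw s a s x - \<sigma> g a x) < \<epsilon> \<and>
          supnorm (\<lambda>x. sandw t b t x - \<sigma> h b x) < \<epsilon> \<and>
          supnorm (sandw s c t) < \<epsilon>)"

end

theory Submission imports Defs begin

lemma supnorm_le:
  assumes "\<And>x. norm (f x) \<le> B" shows "supnorm f \<le> B"
  unfolding supnorm_def by (rule cSUP_least) (use assms in auto)

lemma one_side:
  fixes \<alpha> :: "'g::group_add \<Rightarrow> 'a::t2_space \<Rightarrow> 'a"
  assumes act: "group_action_homeo \<alpha>"
    and tr: "\<And>K U. compact K \<Longrightarrow> open U \<Longrightarrow> U \<noteq> {} \<Longrightarrow> \<exists>g. \<alpha> g ` K \<subseteq> U"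
    and a: "a \<in> C0_pos" and e: "\<epsilon> > 0" and V: "open V" and p: "p \<in> V" "Re (a p) > 0"
  shows "\<exists>s\<in>C0. \<exists>g. supnorm (\<lambda>x. sandw s a s x - induced_action \<alpha> g a x) < \<epsilon>
            \<and> (\<forall>x. s x \<noteq> 0 \<longrightarrow> x \<in> V)"
proof -
  have ca: "continuous_on UNIV a" and a0: "\<And>e. e>0 \<Longrightarrow> \<exists>K. compact K \<and> (\<forall>x. x \<notin> K \<longrightarrow> norm (a x) < e)"
    and ar: "\<And>x. a x = of_real (Re (a x))" and apos: "\<And>x. Re (a x) \<ge> 0"
    using a unfolding C0_pos_def C0_def by (auto simp: complex_eq_iff)
  define A where "A x = Re (a x)" for x
  have cA: "continuous_on UNIV A" unfolding A_def by (intro continuous_intros ca)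
  define \<eta> where "\<eta> = A p / 2"
  have eta: "\<eta> > 0" using p by (simp add: \<eta>_def A_def)
  define U where "U = V \<inter> {x. \<eta> < A x}"
  have oU: "open U" unfolding U_def using V by (intro open_Int open_Collect_less cA continuous_intros)
  have "p \<in> U" using p eta unfolding U_def \<eta>_def A_def by auto
  hence Une: "U \<noteq> {}" by auto
  define \<delta> where "\<delta> = \<epsilon> / 4"
  have d: "\<delta> > 0" using e by (simp add: \<delta>_def)
  obtain K0 where K0: "compact K0" "\<And>x. x \<notin> K0 \<Longrightarrow> norm (a x) < \<delta>" using a0[OF d] by blast
  define K where "K = K0 \<inter> {x. \<delta> \<le> A x}"
  have cK: "compact K" unfolding K_def by (intro compact_Int_closed K0 closed_Collect_le cA continuous_intros)
  have inK: "\<delta> \<le> A x \<Longrightarrow> x \<in> K" for x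
  proof -
    assume h: "\<delta> \<le> A x"
    have "norm (a x) = A x" using ar[of x] apos[of x] unfolding A_def by (metis norm_of_real abs_of_nonneg)
    then have "x \<in> K0" using K0(2)[of x] h by force
    then show ?thesis using h unfolding K_def by auto
  qed
  obtain g where g: "\<alpha> g ` K \<subseteq> U" using tr[OF cK oU Une] by blast
  have gg: "\<alpha> g (\<alpha> (-g) x) = x" for x
    using act unfolding group_action_homeo_def by (metis comp_apply id_apply right_minus)
  have cg: "continuous_on UNIV (\<alpha> g)" "continuous_on UNIV (\<alpha> (-g))"
    using act unfolding group_action_homeo_def by auto
  define A' where "A' x = A (\<alpha> (-g) x)" for x
  have cA': "continuous_on UNIV A'" unfolding A'_def
    by (rule continuous_on_compose2[OF cA cg(2)]) auto
  have A'pos: "A' x \<ge> 0" for x using apos unfolding A'_def A_def by auto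
  have A'U: "\<delta> \<le> A' x \<Longrightarrow> x \<in> \<alpha> g ` K" for x
    using inK[of "\<alpha> (-g) x"] gg[of x] unfolding A'_def by (metis image_eqI)
  define r where "r x = min 1 (max 0 ((A' x - \<delta>) / \<delta>))" for x
  define s where "s x = complex_of_real (sqrt (r x * A' x / max (A x) \<eta>))" for x
  have cr: "continuous_on UNIV r" unfolding r_def by (intro continuous_intros cA') (use d in auto)
  have cs: "continuous_on UNIV s" unfolding s_def
    by (intro continuous_intros cA' cA cr) (use eta in auto)
  have rpos: "r x > 0 \<Longrightarrow> x \<in> \<alpha> g ` K" for x
  proof -
    assume "r x > 0"
    then have "(A' x - \<delta>) / \<delta> > 0" unfolding r_def by (auto simp: min_def max_def split: if_splits)
    then have "\<delta> \<le> A' x" using d by (simp add: zero_less_divide_iff)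
    then show ?thesis by (rule A'U)
  qed
  have r01: "0 \<le> r x" "r x \<le> 1" for x unfolding r_def by auto
  have snz: "s x \<noteq> 0 \<Longrightarrow> x \<in> \<alpha> g ` K" for x
  proof -
    assume "s x \<noteq> 0"
    then have "r x \<noteq> 0" unfolding s_def by auto
    then show ?thesis using rpos[of x] r01[of x] by linarith
  qed
  have sC0: "s \<in> C0" unfolding C0_def
  proof (intro CollectI conjI allI impI cs)
    fix e :: real assume "e > 0"
    have "compact (\<alpha> g ` K)" by (rule compact_continuous_image[OF continuous_on_subset[OF cg(1)] cK]) auto
    then show "\<exists>K. compact K \<and> (\<forall>x. x \<notin> K \<longrightarrow> norm (s x) < e)"
      using snz \<open>e > 0\<close> by (metis norm_zero)
  qed
  have sV: "s x \<noteq> 0 \<longrightarrow> x \<in> V" for x using snz g unfolding U_def by auto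
  have pt: "norm (sandw s a s x - induced_action \<alpha> g a x) \<le> 2 * \<delta>" for x
  proof -
    have ia: "induced_action \<alpha> g a x = of_real (A' x)"
      unfolding induced_action_def A'_def A_def using ar by simp
    have sw: "sandw s a s x = of_real (r x * A' x)"
    proof (cases "r x > 0")
      case True
      then have "x \<in> U" using rpos g by auto
      then have "A x > \<eta>" unfolding U_def by auto
      then have m: "max (A x) \<eta> = A x" "A x > 0" using eta by auto
      have "r x * A' x / A x \<ge> 0" using r01 A'pos m by auto
      then have "cnj (s x) * s x = of_real (r x * A' x / A x)"
        unfolding s_def using m r01[of x] A'pos[of x] by (simp add: of_real_mult[symmetric] del: of_real_mult)
      then have "sandw s a s x = of_real (r x * A' x / A x) * of_real (A x)"
        unfolding sandw_def using ar[of x] unfolding A_def by (simp add: mult_ac)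
      also have "\<dots> = of_real (r x * A' x)" using m by (simp add: of_real_mult[symmetric] of_real_divide[symmetric] del: of_real_mult of_real_divide)
      finally show ?thesis .
    next
      case False
      then have "r x = 0" using r01[of x] by linarith
      then show ?thesis unfolding sandw_def s_def by simp
    qed
    have "\<bar>r x * A' x - A' x\<bar> \<le> 2 * \<delta>"
    proof (cases "A' x \<ge> 2 * \<delta>")
      case True
      then have "r x = 1" unfolding r_def using d by (auto simp: field_simps)
      then show ?thesis using d by simp
    next
      case False
      have "r x * A' x \<le> A' x" using r01[of x] A'pos[of x] by (simp add: mult_left_le_one_le)
      then have "\<bar>r x * A' x - A' x\<bar> = (1 - r x) * A' x" by (simp add: algebra_simps)
      also have "\<dots> \<le> 1 * A' x" using r01 A'pos by (intro mult_right_mono) auto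
      finally show ?thesis using False by simp
    qed
    then show ?thesis unfolding ia sw by (metis norm_of_real of_real_diff)
  qed
  have "supnorm (\<lambda>x. sandw s a s x - induced_action \<alpha> g a x) \<le> 2 * \<delta>" by (rule supnorm_le[OF pt])
  also have "\<dots> < \<epsilon>" using e by (simp add: \<delta>_def)
  finally show ?thesis using sC0 sV by blast
qed

lemma one_side':
  fixes \<alpha> :: "'g::group_add \<Rightarrow> 'a::t2_space \<Rightarrow> 'a"
  assumes act: "group_action_homeo \<alpha>"
    and tr: "\<And>K U. compact K \<Longrightarrow> open U \<Longrightarrow> U \<noteq> {} \<Longrightarrow> \<exists>g. \<alpha> g ` K \<subseteq> U"
    and a: "a \<in> C0_pos" and e: "\<epsilon> > 0" and V: "open V"
    and p: "(\<forall>x. a x = 0) \<or> (\<exists>p\<in>V. Re (a p) > 0)"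
  shows "\<exists>s\<in>C0. \<exists>g. supnorm (\<lambda>x. sandw s a s x - induced_action \<alpha> g a x) < \<epsilon>
            \<and> (\<forall>x. s x \<noteq> 0 \<longrightarrow> x \<in> V)"
proof (cases "\<forall>x. a x = 0")
  case True
  have "(\<lambda>x. 0::complex) \<in> C0" unfolding C0_def by auto
  moreover have "supnorm (\<lambda>x. sandw (\<lambda>x. 0) a (\<lambda>x. 0) x - induced_action \<alpha> 0 a x) < \<epsilon>"
    using True e supnorm_le[of "\<lambda>x. sandw (\<lambda>x. 0) a (\<lambda>x. 0) x - induced_action \<alpha> 0 a x" 0]
    by (simp add: sandw_def induced_action_def)
  ultimately show ?thesis by fastforce
next
  case False
  then obtain p where "p \<in> V" "Re (a p) > 0" using p by blast
  then show ?thesis using one_side[OF act tr a e V] by blast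
qed

lemma two_points:
  fixes \<alpha> :: "'g::group_add \<Rightarrow> 'a::t2_space \<Rightarrow> 'a"
  assumes act: "group_action_homeo \<alpha>"
    and tr: "\<And>K U. compact K \<Longrightarrow> open U \<Longrightarrow> U \<noteq> {} \<Longrightarrow> \<exists>g. \<alpha> g ` K \<subseteq> U"
    and xy: "x \<noteq> (y::'a)" and W: "open (W::'a set)" "W \<noteq> {}"
  shows "\<exists>u\<in>W. \<exists>v\<in>W. u \<noteq> v"
proof -
  obtain g where g: "\<alpha> g ` {x, y} \<subseteq> W" using tr[OF _ W, of "{x,y}"] by auto
  have gg: "\<alpha> (-g) (\<alpha> g z) = z" for z
    using act unfolding group_action_homeo_def by (metis comp_apply id_apply left_minus)
  have "\<alpha> g x \<noteq> \<alpha> g y" using xy gg by metis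
  then show ?thesis using g by auto
qed

theorem mainTheorem15:
  fixes \<alpha> :: "'g::group_add \<Rightarrow> 'a::t2_space \<Rightarrow> 'a"
  assumes "group_action_homeo \<alpha>"
    and "locally_compact_space (euclidean :: 'a topology)"
    and "\<not> compact (UNIV :: 'a set)"
    and "\<exists>x y z :: 'a. x \<noteq> y \<and> y \<noteq> z \<and> x \<noteq> z"
    and "\<And>K U. compact K \<Longrightarrow> open U \<Longrightarrow> U \<noteq> {} \<Longrightarrow> \<exists>g. \<alpha> g ` K \<subseteq> U"
  shows "G_separating (induced_action \<alpha>)"
  unfolding G_separating_def
proof (intro ballI allI impI)
  fix a b c :: "'a \<Rightarrow> complex" and \<epsilon> :: real
  assume a: "a \<in> C0_pos" and b: "b \<in> C0_pos" and c: "c \<in> C0" and e: "\<epsilon> > 0"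
  from assms(4) obtain x0 y0 z0 :: 'a where xy: "x0 \<noteq> y0" and "y0 \<noteq> z0" "x0 \<noteq> z0" by blast
  have pos_or: "(\<forall>x. f x = 0) \<or> (\<exists>p. Re (f p) > 0)" if "f \<in> C0_pos" for f
  proof (rule disjCI)
    assume "\<not> (\<exists>p. Re (f p) > 0)"
    moreover have "\<And>x. Im (f x) = 0 \<and> 0 \<le> Re (f x)" using that unfolding C0_pos_def by blast
    ultimately have "\<And>x. Re (f x) = 0" "\<And>x. Im (f x) = 0" by (meson not_less order.antisym)+
    then show "\<forall>x. f x = 0" by (simp add: complex_eq_iff)
  qed
  have ca: "continuous_on UNIV a" using a unfolding C0_pos_def C0_def by auto
  have cb: "continuous_on UNIV b" using b unfolding C0_pos_def C0_def by auto
  define Wa where "Wa = (if \<forall>x. a x = 0 then UNIV else {x. 0 < Re (a x)})"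
  define Wb where "Wb = (if \<forall>x. b x = 0 then UNIV else {x. 0 < Re (b x)})"
  have "open {x. 0 < Re (a x)}" by (intro open_Collect_less continuous_intros ca)
  then have oWa: "open Wa" unfolding Wa_def by simp
  have "open {x. 0 < Re (b x)}" by (intro open_Collect_less continuous_intros cb)
  then have oWb: "open Wb" unfolding Wb_def by simp
  have neWa: "Wa \<noteq> {}" unfolding Wa_def using pos_or[OF a] by auto
  have neWb: "Wb \<noteq> {}" unfolding Wb_def using pos_or[OF b] by auto
  obtain q where q: "q \<in> Wb" using neWb by blast
  obtain u v where uv: "u \<in> Wa" "v \<in> Wa" "u \<noteq> v" using two_points[OF assms(1) assms(5) xy oWa neWa] by blast
  obtain p where p: "p \<in> Wa" "p \<noteq> q" using uv by (cases "u = q") auto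
  obtain Va Vb where V: "open Va" "open Vb" "p \<in> Va" "q \<in> Vb" "Va \<inter> Vb = {}"
    using hausdorff[OF p(2)] by blast
  have ca2: "(\<forall>x. a x = 0) \<or> (\<exists>p\<in>Wa \<inter> Va. Re (a p) > 0)" using p V unfolding Wa_def by (cases "\<forall>x. a x = 0") auto
  have cb2: "(\<forall>x. b x = 0) \<or> (\<exists>p\<in>Wb \<inter> Vb. Re (b p) > 0)" using q V unfolding Wb_def by (cases "\<forall>x. b x = 0") auto
  obtain s g where s: "s \<in> C0" "supnorm (\<lambda>x. sandw s a s x - induced_action \<alpha> g a x) < \<epsilon>"
    "\<forall>x. s x \<noteq> 0 \<longrightarrow> x \<in> Wa \<inter> Va"
    using one_side'[OF assms(1) assms(5) a e open_Int[OF oWa V(1)] ca2] by blast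
  obtain t h where t: "t \<in> C0" "supnorm (\<lambda>x. sandw t b t x - induced_action \<alpha> h b x) < \<epsilon>"
    "\<forall>x. t x \<noteq> 0 \<longrightarrow> x \<in> Wb \<inter> Vb"
    using one_side'[OF assms(1) assms(5) b e open_Int[OF oWb V(2)] cb2] by blast
  have z: "sandw s c t x = 0" for x
  proof (cases "s x = 0")
    case True then show ?thesis unfolding sandw_def by simp
  next
    case False
    then have "x \<in> Va" using s(3) by blast
    then have "x \<notin> Vb" using V(5) by blast
    then have "t x = 0" using t(3) by blast
    then show ?thesis unfolding sandw_def by simp
  qed
  have "supnorm (sandw s c t) < \<epsilon>" using supnorm_le[of "sandw s c t" 0] z e by simp
  then show "\<exists>s\<in>C0. \<exists>t\<in>C0. \<exists>g h.
          supnorm (\<lambda>x. sandw s a s x - induced_action \<alpha> g a x) < \<epsilon> \<and>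
          supnorm (\<lambda>x. sandw t b t x - induced_action \<alpha> h b x) < \<epsilon> \<and>
          supnorm (sandw s c t) < \<epsilon>" using s t by blast
qed

end
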